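(* There does not exist an equal norm tight integer frame with five elements in $\mathcal{H}_3$.
   Context: $\mathcal{H}_M$ is the real $M$-dimensional Hilbert space, identified with $\mathbb{R}^M$ via a fixed orthonormal basis. An equal norm tight integer frame (ENTIF) with $N$ elements in $\mathcal{H}_M$ is an $M\times N$ integer matrix $A$ of rank $M$ with $AA^T=\lambda I_M$ for some $\lambda>0$ and all columns of the same Euclidean norm. *)

theory Defs
  imports "HOL-Analysis.Analysis"
begin

definition real_mat :: "int ^ 'n ^ 'm \<Rightarrow> real ^ 'n ^ 'm" where
  "real_mat A = (\<chi> i j. of_int (A $ i $ j))"

text \<open>Equal norm tight integer frame: integer matrix A of rank M with A A^T = lambda I
  for some lambda > 0, and all columns of the same Euclidean norm.\<close>
definition ENTIF :: "int ^ 'n ^ 'm \<Rightarrow> bool" where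
  "ENTIF A \<longleftrightarrow>
     rank (real_mat A) = CARD('m) \<and>
     (\<exists>lam::real. lam > 0 \<and> real_mat A ** transpose (real_mat A) = lam *\<^sub>R mat 1) \<and>
     (\<forall>j k. norm (column j (real_mat A)) = norm (column k (real_mat A)))"

end

theory Submission imports Defs begin

lemma sq_mod4: "(x::int)^2 mod 4 = (if odd x then 1 else 0)"
proof (cases "odd x")
  case True then obtain k where "x = 2*k+1" by (metis oddE)
  then have "x^2 = 4*(k^2+k)+1" by (simp add: power2_eq_square algebra_simps)
  moreover have "(4*m+1) mod 4 = 1" for m::int by presburger
  ultimately have "x^2 mod 4 = 1" by metis
  then show ?thesis using True by simp
next
  case False then obtain k where "x = 2*k" by (metis evenE)
  then show ?thesis using False by (simp add: power2_eq_square algebra_simps)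
qed

lemma sumsq_mod4: "finite S \<Longrightarrow> (\<Sum>x\<in>S. (f x::int)^2) mod 4 = int (card {x\<in>S. odd (f x)}) mod 4"
proof (induction S rule: finite_induct)
  case empty then show ?case by simp
next
  case (insert a F)
  have fin: "finite {x\<in>F. odd (f x)}" using insert by simp
  have "(\<Sum>x\<in>insert a F. (f x)^2) = (f a)^2 + (\<Sum>x\<in>F. (f x)^2)"
    using insert by simp
  then have "(\<Sum>x\<in>insert a F. (f x)^2) mod 4 = ((f a)^2 mod 4 + (\<Sum>x\<in>F. (f x)^2) mod 4) mod 4"
    by (simp add: mod_add_eq)
  also have "\<dots> = ((if odd (f a) then 1 else 0) + int (card {x\<in>F. odd (f x)}) mod 4) mod 4"
    using insert.IH by (simp add: sq_mod4)
  also have "\<dots> = ((if odd (f a) then 1 else 0) + int (card {x\<in>F. odd (f x)})) mod 4"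
    by (simp add: mod_add_right_eq)
  also have "\<dots> = int (card {x\<in>insert a F. odd (f x)}) mod 4"
  proof (cases "odd (f a)")
    case True
    then have "{x\<in>insert a F. odd (f x)} = insert a {x\<in>F. odd (f x)}" by auto
    then show ?thesis using True fin insert by simp
  next
    case False
    then have "{x\<in>insert a F. odd (f x)} = {x\<in>F. odd (f x)}" by auto
    then show ?thesis using False by simp
  qed
  finally show ?case .
qed

lemma odd_sum_odd: "finite S \<Longrightarrow> (\<forall>x\<in>S. odd (g x::int)) \<Longrightarrow> odd (sum g S) \<longleftrightarrow> odd (card S)"
  by (induction S rule: finite_induct) auto

lemma card_filter_sum: "card {x::'a::finite. P x} = (\<Sum>x\<in>UNIV. if P x then 1 else 0)"
  by (simp add: sum.If_cases)

lemma core: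
  fixes a :: "'i::finite \<Rightarrow> 'j::finite \<Rightarrow> int"
  assumes ci: "CARD('i) = 3" and cj: "CARD('j) = 5"
  shows "\<lbrakk>\<forall>i k. i \<noteq> k \<longrightarrow> (\<Sum>j\<in>UNIV. a i j * a k j) = 0;
          \<forall>i. (\<Sum>j\<in>UNIV. (a i j)^2) = L; \<forall>j. (\<Sum>i\<in>UNIV. (a i j)^2) = C; L > 0\<rbrakk> \<Longrightarrow> False"
proof (induction "nat L" arbitrary: a L C rule: less_induct)
  case (less L a C)
  note orth = less.prems(1) and rows = less.prems(2) and cols = less.prems(3)
  define w where "w i = card {j. odd (a i j)}" for i
  define c where "c j = card {i. odd (a i j)}" for j
  have wmod: "int (w i) mod 4 = L mod 4" for i
    using sumsq_mod4[of UNIV "a i"] rows unfolding w_def by simp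
  have cmod: "int (c j) mod 4 = C mod 4" for j
    using sumsq_mod4[of UNIV "\<lambda>i. a i j"] cols unfolding c_def by simp
  have wle: "w i \<le> 5" for i unfolding w_def using card_mono[of UNIV "{j. odd (a i j)}"] cj by simp
  have cle: "c j \<le> 3" for j unfolding c_def using card_mono[of UNIV "{i. odd (a i j)}"] ci by simp
  have ceq: "int (c j) = C mod 4" for j using cmod[of j] cle[of j] by simp
  have dc: "(\<Sum>i\<in>UNIV. w i) = (\<Sum>j\<in>UNIV. c j)"
    unfolding w_def c_def card_filter_sum by (rule sum.swap)
  have "(\<Sum>i\<in>(UNIV::'i set). \<Sum>j\<in>UNIV. (a i j)^2) = (\<Sum>j\<in>UNIV. \<Sum>i\<in>UNIV. (a i j)^2)"
    by (rule sum.swap)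
  then have LC: "3 * L = 5 * C" using rows cols ci cj by simp
  have sc: "int (\<Sum>j\<in>UNIV. c j) = 5 * (C mod 4)" using ceq cj by (simp add: of_nat_sum)
  consider "C mod 4 = 0" | "C mod 4 = 1" | "C mod 4 = 2" | "C mod 4 = 3" by linarith
  then show False
  proof cases
    case 1
    then have c0: "c j = 0" for j using ceq[of j] by simp
    have ev: "even (a i j)" for i j using c0[of j] unfolding c_def by auto
    define b where "b i j = a i j div 2" for i j
    have ab: "a i j = 2 * b i j" for i j using ev[of i j] unfolding b_def by simp
    have r4: "4 * (\<Sum>j\<in>UNIV. (b i j)^2) = L" for i
    proof -
      have "(\<Sum>j\<in>UNIV. (a i j)^2) = (\<Sum>j\<in>UNIV. 4 * (b i j)^2)"
        by (rule sum.cong) (simp_all add: ab power_mult_distrib)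
      then show ?thesis using rows by (simp add: sum_distrib_left)
    qed
    have c4: "4 * (\<Sum>i\<in>UNIV. (b i j)^2) = C" for j
    proof -
      have "(\<Sum>i\<in>UNIV. (a i j)^2) = (\<Sum>i\<in>UNIV. 4 * (b i j)^2)"
        by (rule sum.cong) (simp_all add: ab power_mult_distrib)
      then show ?thesis using cols by (simp add: sum_distrib_left)
    qed
    have rb: "\<forall>i. (\<Sum>j\<in>UNIV. (b i j)^2) = L div 4" using r4 by (metis nonzero_mult_div_cancel_left zero_neq_numeral)
    have cb: "\<forall>j. (\<Sum>i\<in>UNIV. (b i j)^2) = C div 4" using c4 by (metis nonzero_mult_div_cancel_left zero_neq_numeral)
    have ob: "\<forall>i k. i \<noteq> k \<longrightarrow> (\<Sum>j\<in>UNIV. b i j * b k j) = 0"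
    proof (intro allI impI)
      fix i k assume ik: "i \<noteq> (k::'i)"
      have "(\<Sum>j\<in>UNIV. a i j * a k j) = (\<Sum>j\<in>UNIV. 4 * (b i j * b k j))"
        by (rule sum.cong) (simp_all add: ab)
      then have "4 * (\<Sum>j\<in>UNIV. b i j * b k j) = 0" using orth ik by (simp add: sum_distrib_left)
      then show "(\<Sum>j\<in>UNIV. b i j * b k j) = 0" by simp
    qed
    obtain i0 :: 'i where True by simp
    have L4: "L = 4 * (L div 4)" using r4[of i0] rb by simp
    have "L div 4 > 0" using less.prems(4) L4 by linarith
    moreover have "nat (L div 4) < nat L" using less.prems(4) L4 by linarith
    ultimately show False using less.hyps[OF _ ob rb cb] by blast
  next
    case 2
    have "L mod 4 = 3" using LC 2 by presburger
    then have w3: "int (w i) mod 4 = 3" for i using wmod[of i] by simp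
    have "w i = 3" for i using w3[of i] wle[of i] by presburger
    then have "(\<Sum>i\<in>UNIV. w i) = 9" using ci by simp
    then show False using sc dc 2 by simp
  next
    case 3
    have "L mod 4 = 2" using LC 3 by presburger
    then have w3: "int (w i) mod 4 = 2" for i using wmod[of i] by simp
    have "w i = 2" for i using w3[of i] wle[of i] by presburger
    then have "(\<Sum>i\<in>UNIV. w i) = 6" using ci by simp
    then show False using sc dc 3 by simp
  next
    case 4
    then have c3: "c j = 3" for j using ceq[of j] by simp
    have "{i. odd (a i j)} = UNIV" for j
    proof (rule card_subset_eq)
      show "card {i. odd (a i j)} = card (UNIV::'i set)" using c3[of j] ci unfolding c_def by simp
    qed simp_all
    then have od: "odd (a i j)" for i j by blast
    have "\<not> CARD('i) \<le> Suc 0" using ci by simp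
    then obtain i k :: 'i where ik: "i \<noteq> k" by (auto simp add: card_le_Suc0_iff_eq)
    have "odd (\<Sum>j\<in>UNIV. a i j * a k j)" using odd_sum_odd[of UNIV "\<lambda>j. a i j * a k j"] od cj by simp
    then show False using orth ik by simp
  qed
qed


lemma entif_imp:
  fixes A :: "int ^ 'n::finite ^ 'm::finite"
  assumes "ENTIF A"
  shows "\<exists>L C. (\<forall>i k. i \<noteq> k \<longrightarrow> (\<Sum>j\<in>UNIV. A$i$j * A$k$j) = 0) \<and>
      (\<forall>i. (\<Sum>j\<in>UNIV. (A$i$j)^2) = L) \<and> (\<forall>j. (\<Sum>i\<in>UNIV. (A$i$j)^2) = C) \<and> L > 0"
proof -
  obtain lam :: real where lam: "lam > 0" and eq: "real_mat A ** transpose (real_mat A) = lam *\<^sub>R mat 1"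
    using assms unfolding ENTIF_def by blast
  have nrm: "\<forall>j k. norm (column j (real_mat A)) = norm (column k (real_mat A))"
    using assms unfolding ENTIF_def by blast
  have ent: "real_of_int (\<Sum>j\<in>UNIV. A$i$j * A$k$j) = (if i = k then lam else 0)" for i k
  proof -
    have "(real_mat A ** transpose (real_mat A)) $ i $ k = (lam *\<^sub>R mat 1) $ i $ k" using eq by simp
    then show ?thesis by (simp add: matrix_matrix_mult_def transpose_def real_mat_def mat_def)
  qed
  have col: "(norm (column j (real_mat A)))^2 = real_of_int (\<Sum>i\<in>UNIV. (A$i$j)^2)" for j
    unfolding power2_norm_eq_inner by (simp add: inner_vec_def column_def real_mat_def power2_eq_square)
  obtain i0 :: 'm where True by simp
  obtain j0 :: 'n where True by simp
  have "(\<forall>i k. i \<noteq> k \<longrightarrow> (\<Sum>j\<in>UNIV. A$i$j * A$k$j) = 0)"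
    using ent by (metis of_int_eq_0_iff)
  moreover have "\<forall>i. (\<Sum>j\<in>UNIV. (A$i$j)^2) = (\<Sum>j\<in>UNIV. (A$i0$j)^2)"
  proof
    fix i
    have "real_of_int (\<Sum>j\<in>UNIV. (A$i$j)^2) = lam" "real_of_int (\<Sum>j\<in>UNIV. (A$i0$j)^2) = lam"
      using ent[of i i] ent[of i0 i0] by (simp_all add: power2_eq_square)
    then show "(\<Sum>j\<in>UNIV. (A$i$j)^2) = (\<Sum>j\<in>UNIV. (A$i0$j)^2)" by linarith
  qed
  moreover have "\<forall>j. (\<Sum>i\<in>UNIV. (A$i$j)^2) = (\<Sum>i\<in>UNIV. (A$i$j0)^2)"
  proof
    fix j
    have "real_of_int (\<Sum>i\<in>UNIV. (A$i$j)^2) = real_of_int (\<Sum>i\<in>UNIV. (A$i$j0)^2)"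
      using col[of j] col[of j0] nrm by metis
    then show "(\<Sum>i\<in>UNIV. (A$i$j)^2) = (\<Sum>i\<in>UNIV. (A$i$j0)^2)" by linarith
  qed
  moreover have "(\<Sum>j\<in>UNIV. (A$i0$j)^2) > 0"
  proof -
    have "real_of_int (\<Sum>j\<in>UNIV. (A$i0$j)^2) = lam" using ent[of i0 i0] by (simp add: power2_eq_square)
    then show ?thesis using lam by linarith
  qed
  ultimately show ?thesis by blast
qed

theorem corollary4p13:
  shows "\<not> (\<exists>A :: int ^ 5 ^ 3. ENTIF A)"
proof
  assume "\<exists>A :: int ^ 5 ^ 3. ENTIF A"
  then obtain A :: "int ^ 5 ^ 3" where "ENTIF A" by blast
  from entif_imp[OF this] obtain L C where h:
    "\<forall>i k. i \<noteq> k \<longrightarrow> (\<Sum>j\<in>UNIV. A$i$j * A$k$j) = 0"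
    "\<forall>i. (\<Sum>j\<in>UNIV. (A$i$j)^2) = L" "\<forall>j. (\<Sum>i\<in>UNIV. (A$i$j)^2) = C" "L > 0" by blast
  show False using core[of "\<lambda>i j. A$i$j" L C] h by simp
qed

end
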